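(* If a set $A\subset\mathbb{N}$ has positive upper logarithmic density, i.e. $\limsup_{x\to\infty}\frac{1}{\log x}\sum_{n\in A,\,n\le x}\frac1n>0$, then $A$ contains an infinite L-divisibility chain.
   Context: For an integer $a>1$ let $P(a)$ denote its largest prime factor, and define the set of L-multiples $\mathrm{L}_a=\{ba: b\in\mathbb{N},\ \text{every prime } p\mid b \text{ satisfies } p\ge P(a)\}$ (so $a\in\mathrm{L}_a$, taking $b=1$). An infinite sequence of integers $1<d_1<d_2<\cdots$ is an L-divisibility chain if $d_{j+1}\in\mathrm{L}_{d_j}$ for all $j\ge1$. *)

theory Defs
  imports "HOL-Analysis.Analysis" "HOL-Computational_Algebra.Primes"
begin

definition lpf :: "nat \<Rightarrow> nat" where
  "lpf a = Max (prime_factors a)"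

definition Lmult :: "nat \<Rightarrow> nat set" where
  "Lmult a = {b * a | b. b \<ge> 1 \<and> (\<forall>p. prime p \<longrightarrow> p dvd b \<longrightarrow> p \<ge> lpf a)}"

definition L_chain :: "(nat \<Rightarrow> nat) \<Rightarrow> bool" where
  "L_chain d \<longleftrightarrow> 1 < d 0 \<and> strict_mono d \<and> (\<forall>j. d (Suc j) \<in> Lmult (d j))"

definition upper_log_density :: "nat set \<Rightarrow> ereal" where
  "upper_log_density A =
     Limsup at_top (\<lambda>x::real. ereal ((1 / ln x) * (\<Sum>n\<in>{n\<in>A. 1 \<le> n \<and> real n \<le> x}. 1 / real n)))"

end

theory Submission
  imports Defs
begin

definition pset :: "nat \<Rightarrow> nat set" where
  "pset n = {q. prime q \<and> q \<le> n}"

lemma finite_pset [simp]: "finite (pset n)"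
  unfolding pset_def by auto

lemma prod_primes_dvd:
  fixes C :: nat
  assumes "finite S" "\<forall>q\<in>S. prime q \<and> q dvd C"
  shows "\<Prod>S dvd C"
  using assms
proof (induction S rule: finite_induct)
  case empty then show ?case by simp
next
  case (insert q S)
  have cop: "coprime q (\<Prod>S)"
    proof (rule prod_coprime_right)
    fix x assume "x \<in> S"
    then have "prime x" "x \<noteq> q" using insert by auto
    then show "coprime q x" using insert primes_coprime by blast
  qed
  have "q dvd C" "\<Prod>S dvd C" using insert by auto
  then show ?case using cop insert(1,2) by (simp add: divides_mult)
qed

lemma binom_le: "(2*m+1) choose m \<le> 4^m"
proof -
  have e: "(2*m+1) choose (m+1) = (2*m+1) choose m"
    using binomial_symmetric[of m "2*m+1"] by simp
  have "((2*m+1) choose m) + ((2*m+1) choose (m+1)) = (\<Sum>k\<in>{m,m+1}. (2*m+1) choose k)"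
    by simp
  also have "\<dots> \<le> (\<Sum>k\<le>2*m+1. (2*m+1) choose k)"
    by (intro sum_mono2) auto
  also have "\<dots> = 2^(2*m+1)" by (rule choose_row_sum)
  also have "\<dots> = 2 * 4^m" by (simp add: power_mult)
  finally show ?thesis using e by linarith
qed

lemma mid_primes_dvd:
  "\<Prod>{q. prime q \<and> m+1 < q \<and> q \<le> 2*m+1} dvd ((2*m+1) choose m)"
proof (rule prod_primes_dvd)
  show "finite {q. prime q \<and> m+1 < q \<and> q \<le> 2*m+1}" by auto
  show "\<forall>q\<in>{q. prime q \<and> m+1 < q \<and> q \<le> 2*m+1}. prime q \<and> q dvd ((2*m+1) choose m)"
  proof
    fix q assume q: "q \<in> {q. prime q \<and> m+1 < q \<and> q \<le> 2*m+1}"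
    then have pq: "prime q" by auto
    have "fact m * fact (2*m+1-m) * ((2*m+1) choose m) = (fact (2*m+1) :: nat)"
      by (rule binomial_fact_lemma) simp
    moreover have "q dvd fact (2*m+1)" using q prime_dvd_fact_iff[OF pq, of "2*m+1"] by auto
    ultimately have "q dvd fact m * fact (m+1) * ((2*m+1) choose m)"
      by (simp add: Suc_diff_le)
    moreover have "\<not> q dvd fact m" using prime_dvd_fact_iff[OF pq, of m] q by simp
    moreover have h: "(q dvd fact (m+1)) = (q \<le> m+1)" by (rule prime_dvd_fact_iff[OF pq])
    then have "\<not> q dvd fact (m+1)" using q by simp
    ultimately have "q dvd ((2*m+1) choose m)"
      using pq prime_dvd_mult_iff by metis
    then show "prime q \<and> q dvd ((2*m+1) choose m)" using pq by blast
  qed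
qed

lemma cheb_prod: "\<Prod>(pset n) \<le> 4^n"
proof (induction n rule: less_induct)
  case (less n)
  show ?case
  proof (cases "n \<le> 2")
    case True
    then have "n = 0 \<or> n = 1 \<or> n = 2" by linarith
    moreover have "pset 0 = {}" "pset 1 = {}" "pset 2 = {2}"
    proof -
      have "prime x \<and> x \<le> 2 \<longleftrightarrow> x = 2" for x :: nat
      proof
        assume "prime x \<and> x \<le> 2"
        then show "x = 2" using prime_ge_2_nat[of x] by linarith
      qed simp
      then show "pset 2 = {2}" unfolding pset_def by blast
      have "\<not> (prime x \<and> x \<le> 1)" for x :: nat
        using prime_ge_2_nat[of x] by linarith
      then show "pset 0 = {}" "pset 1 = {}" unfolding pset_def by auto
    qed
    ultimately show ?thesis by auto
  next
    case False
    show ?thesis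
    proof (cases "even n")
      case True
      then have np: "\<not> prime n" using False prime_odd_nat[of n] by auto
      have "\<And>q. prime q \<and> q \<le> n \<longleftrightarrow> prime q \<and> q \<le> n - 1"
      proof -
        fix q show "prime q \<and> q \<le> n \<longleftrightarrow> prime q \<and> q \<le> n - 1"
          using np by (cases "q = n") auto
      qed
      then have "pset n = pset (n-1)" unfolding pset_def by blast
      then have "\<Prod>(pset n) \<le> 4^(n-1)" using less[of "n-1"] False by simp
      also have "\<dots> \<le> 4^n" by (intro power_increasing) auto
      finally show ?thesis .
    next
      case odd: False
      then obtain m where n: "n = 2*m+1" using oddE by blast
      have m1: "m \<ge> 1" using n False by auto
      have split: "pset n = pset (m+1) \<union> {q. prime q \<and> m+1 < q \<and> q \<le> 2*m+1}"
        unfolding pset_def n by auto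
      have disj: "pset (m+1) \<inter> {q. prime q \<and> m+1 < q \<and> q \<le> 2*m+1} = {}"
        unfolding pset_def by auto
      have "\<Prod>(pset n) = \<Prod>(pset (m+1)) * \<Prod>{q. prime q \<and> m+1 < q \<and> q \<le> 2*m+1}"
        unfolding split by (rule prod.union_disjoint) (use disj in auto)
      also have "\<dots> \<le> 4^(m+1) * 4^m"
      proof (rule mult_le_mono)
        show "\<Prod>(pset (m+1)) \<le> 4^(m+1)" using less[of "m+1"] n m1 by simp
        have "\<Prod>{q. prime q \<and> m+1 < q \<and> q \<le> 2*m+1} \<le> (2*m+1) choose m"
          by (rule dvd_imp_le[OF mid_primes_dvd]) simp
        then show "\<Prod>{q. prime q \<and> m+1 < q \<and> q \<le> 2*m+1} \<le> 4^m"
          using binom_le order_trans by blast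
      qed
      also have "\<dots> = 4^n" using n by (simp add: power_add[symmetric])
      finally show ?thesis .
    qed
  qed
qed

lemma theta_le: "(\<Sum>q\<in>pset n. ln (real q)) \<le> real n * ln 4"
proof -
  have pos: "\<forall>q\<in>pset n. real q > 0" unfolding pset_def using prime_gt_0_nat by auto
  have "(\<Sum>q\<in>pset n. ln (real q)) = ln (\<Prod>q\<in>pset n. real q)"
    using pos by (simp add: ln_prod)
  also have "\<dots> \<le> ln (4 ^ n)"
  proof (subst ln_le_cancel_iff)
    show "0 < (\<Prod>q\<in>pset n. real q)" using pos by (simp add: prod_pos)
    show "0 < (4::real)^n" by simp
    have "real (\<Prod>(pset n)) \<le> real (4^n)" using cheb_prod of_nat_le_iff by blast
    then show "(\<Prod>q\<in>pset n. real q) \<le> 4^n" by simp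
  qed
  also have "\<dots> = real n * ln 4" by (simp add: ln_realpow)
  finally show ?thesis .
qed


lemma ln_ge_pf: 
  assumes "m \<ge> (1::nat)"
  shows "(\<Sum>q\<in>prime_factors m. ln (real q)) \<le> ln (real m)"
proof -
  have d: "\<Prod>(prime_factors m) dvd m"
    by (rule prod_primes_dvd) (auto simp: in_prime_factors_iff)
  have pos: "\<forall>q\<in>prime_factors m. real q > 0"
  proof
    fix q assume "q \<in> prime_factors m"
    then have "prime q" by (rule in_prime_factors_imp_prime)
    then show "real q > 0" using prime_gt_0_nat by simp
  qed
  have "\<Prod>(prime_factors m) \<le> m" by (rule dvd_imp_le[OF d]) (use assms in simp)
  then have l1: "real (\<Prod>(prime_factors m)) \<le> real m" by (simp only: of_nat_le_iff)
  have l2: "real (\<Prod>(prime_factors m)) = (\<Prod>q\<in>prime_factors m. real q)" by (rule of_nat_prod)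
  have le: "(\<Prod>q\<in>prime_factors m. real q) \<le> real m" using l1 l2 by linarith
  have "(\<Sum>q\<in>prime_factors m. ln (real q)) = ln (\<Prod>q\<in>prime_factors m. real q)"
    using pos by (simp add: ln_prod)
  also have "\<dots> \<le> ln (real m)"
    using le pos assms by (subst ln_le_cancel_iff) (auto intro: prod_pos)
  finally show ?thesis .
qed

lemma card_mult_ge:
  assumes "q > (0::nat)"
  shows "n div q \<le> card {m\<in>{1..n}. q dvd m}"
proof -
  have "(\<lambda>j. j*q) ` {1..n div q} \<subseteq> {m\<in>{1..n}. q dvd m}"
  proof
    fix x assume "x \<in> (\<lambda>j. j*q) ` {1..n div q}"
    then obtain j where j: "j \<in> {1..n div q}" "x = j*q" by auto
    have "j*q \<le> (n div q)*q" using j by auto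
    also have "\<dots> \<le> n" by simp
    finally show "x \<in> {m\<in>{1..n}. q dvd m}" using j assms by auto
  qed
  then have c1: "card ((\<lambda>j. j*q) ` {1..n div q}) \<le> card {m\<in>{1..n}. q dvd m}"
    by (intro card_mono) auto
  have "inj_on (\<lambda>j. j*q) {1..n div q}" using assms by (auto simp: inj_on_def)
  then have "card ((\<lambda>j. j*q) ` {1..n div q}) = n div q" by (simp add: card_image)
  then show ?thesis using c1 by simp
qed

lemma mertens1:
  assumes "n \<ge> 1"
  shows "(\<Sum>q\<in>pset n. ln (real q) / real q) \<le> ln (real n) + ln 4"
proof -
  have pf: "prime_factors m = {q\<in>pset n. q dvd m}" if "m \<in> {1..n}" for m
  proof -
    have "x \<le> n" if "x dvd m" for x using that \<open>m \<in> {1..n}\<close> dvd_imp_le[of x m] by auto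
    then show ?thesis using \<open>m \<in> {1..n}\<close> unfolding pset_def by (auto simp: in_prime_factors_iff)
  qed
  have "(\<Sum>q\<in>pset n. ln (real q) * real (card {m\<in>{1..n}. q dvd m}))
      = (\<Sum>q\<in>pset n. \<Sum>m\<in>{m\<in>{1..n}. q dvd m}. ln (real q))"
    by (simp add: mult.commute)
  also have "\<dots> = (\<Sum>m\<in>{1..n}. \<Sum>q\<in>{q\<in>pset n. q dvd m}. ln (real q))"
    by (rule sum.swap_restrict[symmetric]) auto
  also have "\<dots> = (\<Sum>m\<in>{1..n}. \<Sum>q\<in>prime_factors m. ln (real q))"
    by (intro sum.cong) (auto simp: pf)
  also have "\<dots> \<le> (\<Sum>m\<in>{1..n}. ln (real m))"
    by (intro sum_mono ln_ge_pf) auto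
  also have "\<dots> \<le> (\<Sum>m\<in>{1..n}. ln (real n))"
    by (intro sum_mono) auto
  also have "\<dots> = real n * ln (real n)" by simp
  finally have A: "(\<Sum>q\<in>pset n. ln (real q) * real (card {m\<in>{1..n}. q dvd m})) \<le> real n * ln (real n)" .
  have B: "real n * (ln (real q) / real q) \<le> ln (real q) * real (card {m\<in>{1..n}. q dvd m}) + ln (real q)"
    if q: "q \<in> pset n" for q
  proof -
    have qp: "q > 0" "prime q" using q prime_gt_0_nat unfolding pset_def by auto
    have lq: "ln (real q) \<ge> 0" using qp by auto
    have "real n < real (n div q + 1) * real q"
    proof -
      have "n < (n div q + 1) * q" using qp
        by (metis add.commute div_mult_mod_eq mod_less_divisor nat_add_left_cancel_less mult.commute mult_Suc_right plus_1_eq_Suc)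
      then show ?thesis by (metis of_nat_less_iff of_nat_mult)
    qed
    then have "real n \<le> (real (n div q) + 1) * real q" by (simp add: algebra_simps)
    then have "real n / real q \<le> real (n div q) + 1" using qp by (simp add: pos_divide_le_eq)
    also have "\<dots> \<le> real (card {m\<in>{1..n}. q dvd m}) + 1" using card_mult_ge[OF qp(1), of n] by simp
    finally have "real n / real q \<le> real (card {m\<in>{1..n}. q dvd m}) + 1" .
    then have "ln (real q) * (real n / real q) \<le> ln (real q) * (real (card {m\<in>{1..n}. q dvd m}) + 1)"
      using lq by (rule mult_left_mono)
    then show ?thesis by (simp add: algebra_simps)
  qed
  have "real n * (\<Sum>q\<in>pset n. ln (real q) / real q) = (\<Sum>q\<in>pset n. real n * (ln (real q) / real q))"
    by (simp add: sum_distrib_left)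
  also have "\<dots> \<le> (\<Sum>q\<in>pset n. ln (real q) * real (card {m\<in>{1..n}. q dvd m}) + ln (real q))"
    by (intro sum_mono B)
  also have "\<dots> = (\<Sum>q\<in>pset n. ln (real q) * real (card {m\<in>{1..n}. q dvd m})) + (\<Sum>q\<in>pset n. ln (real q))"
    by (simp add: sum.distrib)
  also have "\<dots> \<le> real n * ln (real n) + real n * ln 4"
    using A theta_le[of n] by linarith
  also have "\<dots> = real n * (ln (real n) + ln 4)" by (simp add: distrib_left)
  finally have "real n * (\<Sum>q\<in>pset n. ln (real q) / real q) \<le> real n * (ln (real n) + ln 4)" .
  moreover have "real n > 0" using assms by simp
  ultimately show ?thesis using mult_le_cancel_left_pos by blast
qed


definition SS :: "nat \<Rightarrow> real" where "SS N = (\<Sum>q\<in>pset N. 1 / real q)"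
definition AA :: "nat \<Rightarrow> real" where "AA N = (\<Sum>q\<in>pset N. ln (real q) / real q)"
definition EE :: "nat \<Rightarrow> real" where "EE N = SS N + (ln 4 - AA N) / ln (real N)"

lemma pset_Suc: "pset (Suc N) = (if prime (Suc N) then insert (Suc N) (pset N) else pset N)"
  unfolding pset_def by (auto simp: le_Suc_eq)

lemma SS_AA_Suc:
  fixes N :: nat
  defines "t \<equiv> (if prime (Suc N) then 1 / real (Suc N) else 0)"
  shows "SS (Suc N) = SS N + t" "AA (Suc N) = AA N + t * ln (real (Suc N))"
proof -
  have nin: "Suc N \<notin> pset N" unfolding pset_def by auto
  show "SS (Suc N) = SS N + t"
    unfolding SS_def t_def pset_Suc using nin by (simp add: sum.insert_remove)
  show "AA (Suc N) = AA N + t * ln (real (Suc N))"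
    unfolding AA_def t_def pset_Suc using nin by (simp add: sum.insert_remove)
qed

lemma ln_ratio_le:
  fixes u v :: real
  assumes "0 < v" "v \<le> u"
  shows "1 - v / u \<le> ln u - ln v"
proof -
  have "ln (v / u) \<le> v / u - 1" using assms by (intro ln_le_minus_one) simp
  moreover have "ln (v / u) = ln v - ln u" using assms by (simp add: ln_div)
  ultimately show ?thesis by linarith
qed

lemma EE_step:
  assumes "N \<ge> 2"
  shows "EE (Suc N) - ln (ln (real (Suc N))) \<le> EE N - ln (ln (real N))"
proof -
  define t where "t = (if prime (Suc N) then 1 / real (Suc N) else 0)"
  define u where "u = ln (real (Suc N))"
  define v where "v = ln (real N)"
  have v0: "v > 0" unfolding v_def using assms by simp
  have vu: "v \<le> u" unfolding u_def v_def using assms by simp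
  have u0: "u > 0" using v0 vu by linarith
  have e1: "EE (Suc N) = SS N + (ln 4 - AA N) / u"
  proof -
    have "EE (Suc N) = SS N + t + (ln 4 - AA N - t * u) / u"
      unfolding EE_def SS_AA_Suc[of N, folded t_def] u_def by (simp add: algebra_simps)
    also have "\<dots> = SS N + (ln 4 - AA N) / u" using u0 by (simp add: field_simps)
    finally show ?thesis .
  qed
  have e2: "EE N = SS N + (ln 4 - AA N) / v" unfolding EE_def v_def by simp
  have A: "AA N - ln 4 \<le> v" using mertens1[of N] assms unfolding AA_def v_def by simp
  have d: "1 / v - 1 / u \<ge> 0" using v0 vu by (simp add: frac_le)
  have "EE (Suc N) - EE N = (AA N - ln 4) * (1 / v - 1 / u)"
    unfolding e1 e2 using u0 v0 by (simp add: field_simps)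
  also have "\<dots> \<le> v * (1 / v - 1 / u)" using A d by (rule mult_right_mono)
  also have "\<dots> = 1 - v / u" using v0 by (simp add: field_simps)
  also have "\<dots> \<le> ln u - ln v" using v0 vu by (rule ln_ratio_le)
  finally show ?thesis unfolding u_def v_def by linarith
qed

lemma EE_bound: "N \<ge> 2 \<Longrightarrow> EE N - ln (ln (real N)) \<le> EE 2 - ln (ln 2)"
proof (induction N rule: dec_induct)
  case base then show ?case by simp
next
  case (step n)
  then show ?case using EE_step[of n] by simp
qed

lemma mertens2: "\<exists>C. \<forall>N\<ge>2. SS N \<le> ln (ln (real N)) + C"
proof (intro exI allI impI)
  fix N :: nat assume N: "N \<ge> 2"
  have v0: "ln (real N) > 0" using N by simp
  have A: "AA N - ln 4 \<le> ln (real N)" using mertens1[of N] N unfolding AA_def by simp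
  have "(AA N - ln 4) / ln (real N) \<le> 1" using A v0 by (simp add: divide_le_eq)
  then have "SS N \<le> EE N + 1" unfolding EE_def by (simp add: diff_divide_distrib)
  then show "SS N \<le> ln (ln (real N)) + (EE 2 - ln (ln 2) + 1)"
    using EE_bound[OF N] by linarith
qed


definition V :: "nat \<Rightarrow> real" where
  "V p = (\<Prod>q\<in>{q. prime q \<and> q < p}. (1 - 1 / real q))"

lemma V_factor_pos: "prime q \<Longrightarrow> 1 - 1 / real q > 0"
  using prime_ge_2_nat[of q] by (simp add: field_simps)

lemma V_pos: "V p > 0"
  unfolding V_def by (rule prod_pos) (use V_factor_pos in auto)

lemma tel: "M \<ge> 1 \<Longrightarrow> (\<Sum>k\<in>{2..M}. 1 / (real k * (real k - 1))) = 1 - 1 / real M"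
proof (induction M rule: dec_induct)
  case base then show ?case by simp
next
  case (step n)
  have "{2..Suc n} = insert (Suc n) {2..n}" using step by auto
  then have "(\<Sum>k\<in>{2..Suc n}. 1 / (real k * (real k - 1)))
      = 1 / (real (Suc n) * (real (Suc n) - 1)) + (\<Sum>k\<in>{2..n}. 1 / (real k * (real k - 1)))"
    by simp
  also have "\<dots> = 1 / (real (Suc n) * real n) + (1 - 1 / real n)"
  proof -
    have h: "real (Suc n) - 1 = real n" by simp
    show ?thesis by (simp only: h step.IH)
  qed
  also have "\<dots> = 1 - 1 / real (Suc n)"
  proof -
    have n0: "real n > 0" using step(1) by simp
    then have "real n + real n * real n \<noteq> 0" by (smt (verit) mult_pos_pos)
    then show ?thesis using n0 by (simp add: field_simps)
  qed
  finally show ?case .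
qed

lemma sum_sq_le: "(\<Sum>q\<in>pset M. 1 / (real q * (real q - 1))) \<le> 1"
proof (cases "M \<ge> 1")
  case True
  have sub: "pset M \<subseteq> {2..M}"
  proof
    fix x assume "x \<in> pset M"
    then have "prime x" "x \<le> M" unfolding pset_def by auto
    then show "x \<in> {2..M}" using prime_ge_2_nat[of x] by simp
  qed
  have "(\<Sum>q\<in>pset M. 1 / (real q * (real q - 1))) \<le> (\<Sum>k\<in>{2..M}. 1 / (real k * (real k - 1)))"
  proof (rule sum_mono2)
    show "finite {2..M}" by simp
    show "pset M \<subseteq> {2..M}" by (rule sub)
    show "0 \<le> 1 / (real k * (real k - 1))" if "k \<in> {2..M} - pset M" for k
      using that by auto
  qed
  also have "\<dots> = 1 - 1 / real M" using True by (rule tel)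
  also have "\<dots> \<le> 1" by simp
  finally show ?thesis .
next
  case False
  have "\<not> (prime x \<and> x \<le> M)" for x :: nat using False prime_ge_2_nat[of x] by linarith
  then have "pset M = {}" unfolding pset_def by blast
  then show ?thesis by simp
qed

lemma ln_factor_ge:
  assumes "prime q"
  shows "ln (1 - 1 / real q) \<ge> - (1 / real q) - 1 / (real q * (real q - 1))"
proof -
  have q2: "real q \<ge> 2" using prime_ge_2_nat[OF assms] by simp
  define y where "y = 1 - 1 / real q"
  have y0: "y > 0" unfolding y_def using V_factor_pos[OF assms] .
  have "ln (1 / y) \<le> 1 / y - 1" using y0 by (intro ln_le_minus_one) simp
  then have "ln y \<ge> 1 - 1 / y" using y0 by (simp add: ln_div)
  moreover have "1 - 1 / y = - (1 / real q) - 1 / (real q * (real q - 1))"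
    unfolding y_def using q2 by (simp add: field_simps)
  ultimately show ?thesis unfolding y_def by simp
qed

lemma V_lower: "\<exists>\<kappa>>0. \<forall>p. prime p \<longrightarrow> \<kappa> \<le> V p * ln (real p)"
proof -
  obtain C where C: "\<forall>N\<ge>2. SS N \<le> ln (ln (real N)) + C" using mertens2 by blast
  define \<kappa> where "\<kappa> = min (exp (- C - 1)) (ln 2)"
  have k0: "\<kappa> > 0" unfolding \<kappa>_def by simp
  have "\<kappa> \<le> V p * ln (real p)" if p: "prime p" for p
  proof (cases "p = 2")
    case True
    have "\<not> (prime x \<and> x < 2)" for x :: nat using prime_ge_2_nat[of x] by linarith
    then have e: "{q::nat. prime q \<and> q < 2} = {}" by blast
    have "V p = 1" unfolding V_def True e by (rule prod.empty)
    then show ?thesis unfolding \<kappa>_def True by simp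
  next
    case False
    then have p3: "p \<ge> 3" using prime_ge_2_nat[OF p] by simp
    have set: "{q. prime q \<and> q < p} = pset (p - 1)" unfolding pset_def using p3 by auto
    have "ln (V p) = (\<Sum>q\<in>pset (p-1). ln (1 - 1 / real q))"
      unfolding V_def set
      by (rule ln_prod) (auto simp: pset_def intro: V_factor_pos)
    also have "\<dots> \<ge> (\<Sum>q\<in>pset (p-1). - (1 / real q) - 1 / (real q * (real q - 1)))"
      by (intro sum_mono ln_factor_ge) (simp add: pset_def)
    finally have "ln (V p) \<ge> - SS (p-1) - (\<Sum>q\<in>pset (p-1). 1 / (real q * (real q - 1)))"
      unfolding SS_def by (simp add: sum_subtractf sum_negf)
    then have l1: "ln (V p) \<ge> - SS (p-1) - 1" using sum_sq_le[of "p-1"] by linarith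
    have "SS (p-1) \<le> ln (ln (real (p-1))) + C" using C p3 by (simp del: of_nat_diff)
    moreover have "ln (ln (real (p-1))) \<le> ln (ln (real p))" using p3 by simp
    ultimately have l2: "ln (V p) \<ge> - ln (ln (real p)) - C - 1" using l1 by linarith
    have lp: "ln (real p) > 0" using p3 by simp
    have "exp (- C - 1) / ln (real p) = exp (- ln (ln (real p)) - C - 1)"
      using lp by (simp add: exp_diff exp_minus exp_add field_simps)
    also have "\<dots> \<le> exp (ln (V p))" using l2 by simp
    also have "\<dots> = V p" using V_pos by simp
    finally have "exp (- C - 1) \<le> V p * ln (real p)" using lp by (simp add: divide_le_eq)
    then show ?thesis unfolding \<kappa>_def by simp
  qed
  then show ?thesis using k0 by blast
qed


definition rough :: "nat \<Rightarrow> nat \<Rightarrow> bool" where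
  "rough r m \<longleftrightarrow> (\<forall>q. prime q \<longrightarrow> q dvd m \<longrightarrow> r \<le> q)"

definition ttop :: "nat \<Rightarrow> nat" where
  "ttop c = (if c \<le> 1 then 2 else lpf c)"

definition LL :: "nat \<Rightarrow> nat set" where
  "LL c = {c * m | m. m \<ge> 1 \<and> rough (ttop c) m}"

definition w :: "nat \<Rightarrow> real" where
  "w c = V (ttop c) / real c"

lemma lpf_mem:
  assumes "c > 1"
  shows "lpf c \<in> prime_factors c"
proof -
  obtain p where p: "prime p" "p dvd c" using prime_factor_nat[of c] assms by auto
  then have "p \<in> prime_factors c" using assms by (simp add: in_prime_factors_iff)
  then have "prime_factors c \<noteq> {}" by blast
  then show ?thesis unfolding lpf_def by (intro Max_in) auto
qed

lemma lpf_ge: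
  assumes "c > 1" "prime q" "q dvd c"
  shows "q \<le> lpf c"
proof -
  have "q \<in> prime_factors c" using assms by (auto simp: in_prime_factors_iff)
  then show ?thesis unfolding lpf_def by (intro Max_ge) auto
qed

lemma ttop_prime: "prime (ttop c)"
  unfolding ttop_def using lpf_mem[of c] by (auto simp: in_prime_factors_iff)

lemma ttop_le:
  assumes "c > 1" shows "ttop c \<le> c"
proof -
  have "lpf c dvd c" using lpf_mem[OF assms] by (simp add: in_prime_factors_iff)
  then have "lpf c \<le> c" using assms by (intro dvd_imp_le) auto
  then show ?thesis using assms unfolding ttop_def by simp
qed

lemma rough_one [simp]: "rough r 1"
  unfolding rough_def
proof (intro allI impI)
  fix q :: nat assume "prime q" "q dvd 1"
  then show "r \<le> q" by simp
qed

lemma rough_mult: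
  assumes "rough r a" "rough r b" shows "rough r (a * b)"
  unfolding rough_def
proof (intro allI impI)
  fix q :: nat assume q: "prime q" "q dvd a * b"
  then have "q dvd a \<or> q dvd b" by (simp add: prime_dvd_mult_iff)
  then show "r \<le> q" using assms q(1) unfolding rough_def by blast
qed

lemma rough_mono: "rough r a \<Longrightarrow> r' \<le> r \<Longrightarrow> rough r' a"
  unfolding rough_def using le_trans by blast

lemma self_LL: "c \<in> LL c"
proof -
  have r: "rough (ttop c) 1" by (rule rough_one)
  have "c = c * 1 \<and> (1::nat) \<ge> 1 \<and> rough (ttop c) 1" using r by simp
  then show ?thesis unfolding LL_def by blast
qed

lemma LL_ge: "n \<in> LL c \<Longrightarrow> c \<le> n"
proof -
  assume "n \<in> LL c"
  then obtain m where "n = c * m" "m \<ge> 1" unfolding LL_def by blast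
  then show "c \<le> n" by simp
qed

lemma ttop_mono:
  assumes "b \<in> LL a" "a \<ge> 1"
  shows "ttop a \<le> ttop b"
proof -
  obtain m where m: "b = a * m" "m \<ge> 1" "rough (ttop a) m" using assms(1) unfolding LL_def by blast
  show ?thesis
  proof (cases "b \<le> 1")
    case True
    have "a \<le> b" using m by simp
    then have "a = 1" "b = 1" using True assms(2) by linarith+
    then show ?thesis by simp
  next
    case False
    then have tb: "ttop b = lpf b" unfolding ttop_def by simp
    show ?thesis
    proof (cases "a \<le> 1")
      case True
      then show ?thesis using tb lpf_mem[of b] False
        by (simp add: ttop_def in_prime_factors_iff prime_ge_2_nat)
    next
      case a1: False
      then have "ttop a = lpf a" unfolding ttop_def by simp
      moreover have "lpf a \<le> lpf b"
      proof (rule lpf_ge)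
        show "1 < b" using False by simp
        show "prime (lpf a)" using lpf_mem[of a] a1 by (simp add: in_prime_factors_iff)
        have "lpf a dvd a" using lpf_mem[of a] a1 by (simp add: in_prime_factors_iff)
        then show "lpf a dvd b" using m by simp
      qed
      ultimately show ?thesis using tb by simp
    qed
  qed
qed

lemma LL_trans:
  assumes "b \<in> LL a" "c \<in> LL b" "a \<ge> 1"
  shows "c \<in> LL a"
proof -
  obtain m where m: "b = a * m" "m \<ge> 1" "rough (ttop a) m" using assms(1) unfolding LL_def by blast
  obtain m' where m': "c = b * m'" "m' \<ge> 1" "rough (ttop b) m'" using assms(2) unfolding LL_def by blast
  have "rough (ttop a) m'" using m'(3) ttop_mono[OF assms(1,3)] by (rule rough_mono)
  then have "rough (ttop a) (m * m')" using m(3) rough_mult by blast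
  moreover have "c = a * (m * m')" using m m' by simp
  moreover have "m * m' \<ge> 1" using m m' by simp
  ultimately show ?thesis unfolding LL_def by blast
qed

lemma LL_proper_less:
  assumes "a \<in> LL b" "a \<noteq> b"
  shows "b < a"
proof -
  obtain m where m: "a = b * m" "m \<ge> 1" using assms(1) unfolding LL_def by blast
  then have "m \<noteq> 1" using assms(2) by auto
  then have "m \<ge> 2" using m by simp
  moreover have "b \<noteq> 0" using m assms(2) by auto
  ultimately show ?thesis using m by simp
qed


lemma LL_child:
  assumes "a \<in> LL c" "a \<noteq> c" "c \<ge> 1"
  shows "\<exists>p. prime p \<and> ttop c \<le> p \<and> a \<in> LL (c*p) \<and> ttop (c*p) = p"
proof -
  obtain m where m: "a = c * m" "m \<ge> 1" "rough (ttop c) m" using assms(1) unfolding LL_def by blast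
  have m1: "m > 1" using m assms(2) by (cases "m = 1") auto
  obtain q where q: "prime q" "q dvd m" using prime_factor_nat[of m] m1 by auto
  have qin: "q \<in> prime_factors m" using q m1 by (simp add: in_prime_factors_iff)
  define p where "p = Min (prime_factors m)"
  have pin: "p \<in> prime_factors m" unfolding p_def using qin by (intro Min_in) auto
  then have pp: "prime p" "p dvd m" by (auto simp: in_prime_factors_iff)
  have pge: "ttop c \<le> p" using m(3) pp unfolding rough_def by blast
  obtain m2 where m2: "m = p * m2" using pp(2) by (rule dvdE)
  have m2pos: "m2 \<ge> 1" using m2 m(2) by (cases "m2 = 0") auto
  have rough2: "rough p m2"
    unfolding rough_def
  proof (intro allI impI)
    fix r assume r: "prime r" "r dvd m2"
    then have "r dvd m" using m2 by simp
    then have "r \<in> prime_factors m" using r m1 by (simp add: in_prime_factors_iff)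
    then show "p \<le> r" unfolding p_def by (intro Min_le) auto
  qed
  have p2: "p \<ge> 2" using pp(1) by (rule prime_ge_2_nat)
  have cp1: "c * p > 1" using p2 assms(3)
    by (metis less_le_trans mult_le_mono one_less_numeral_iff semiring_norm(76) mult_1)
  have tcp: "ttop (c*p) = p"
  proof -
    have "p \<le> lpf (c*p)" using cp1 pp(1) by (rule lpf_ge) simp
    moreover have "lpf (c*p) \<le> p"
    proof -
      have "lpf (c*p) \<in> prime_factors (c*p)" using cp1 by (rule lpf_mem)
      then have l: "prime (lpf (c*p))" "lpf (c*p) dvd c * p" by (auto simp: in_prime_factors_iff)
      then have "lpf (c*p) dvd c \<or> lpf (c*p) dvd p" by (simp add: prime_dvd_mult_iff)
      then show ?thesis
      proof
        assume "lpf (c*p) dvd p"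
        then show ?thesis using pp(1) l(1) primes_dvd_imp_eq by (metis order_refl)
      next
        assume d: "lpf (c*p) dvd c"
        have c1: "c > 1"
        proof (rule ccontr)
          assume "\<not> c > 1"
          then have "c = 1" using assms(3) by simp
          then show False using d l(1) by simp
        qed
        have "lpf (c*p) \<le> lpf c" using c1 l(1) d by (rule lpf_ge)
        also have "lpf c = ttop c" using c1 unfolding ttop_def by simp
        finally show ?thesis using pge by simp
      qed
    qed
    ultimately show ?thesis unfolding ttop_def using cp1 by simp
  qed
  have "a = (c*p) * m2" using m m2 by simp
  then have "a \<in> LL (c*p)" unfolding LL_def using tcp m2pos rough2 by auto
  then show ?thesis using pp pge tcp by blast
qed

lemma V_Suc: "V (Suc N) = (if prime N then V N * (1 - 1 / real N) else V N)"
proof -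
  have s: "{q. prime q \<and> q < Suc N} = (if prime N then insert N {q. prime q \<and> q < N} else {q. prime q \<and> q < N})"
    by (auto simp: less_Suc_eq)
  show ?thesis unfolding V_def s by (simp add: mult.commute)
qed

lemma tele:
  assumes "r \<le> N"
  shows "(\<Sum>p\<in>{p. prime p \<and> r \<le> p \<and> p < N}. V p / real p) = V r - V N"
  using assms
proof (induction N rule: dec_induct)
  case base
  have e: "{p. prime p \<and> r \<le> p \<and> p < r} = {}" by auto
  show ?case unfolding e by simp
next
  case (step n)
  have s: "{p. prime p \<and> r \<le> p \<and> p < Suc n} =
      (if prime n then insert n {p. prime p \<and> r \<le> p \<and> p < n} else {p. prime p \<and> r \<le> p \<and> p < n})"
    using step(1) by (auto simp: less_Suc_eq)
  show ?case
  proof (cases "prime n")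
    case True
    have n0: "real n > 0" using True prime_gt_0_nat by simp
    have "(\<Sum>p\<in>{p. prime p \<and> r \<le> p \<and> p < Suc n}. V p / real p)
        = V n / real n + (\<Sum>p\<in>{p. prime p \<and> r \<le> p \<and> p < n}. V p / real p)"
      unfolding s using True by simp
    also have "\<dots> = V n / real n + (V r - V n)" using step.IH by simp
    also have "\<dots> = V r - V (Suc n)" unfolding V_Suc using True n0 by (simp add: field_simps)
    finally show ?thesis .
  next
    case False
    then show ?thesis unfolding s V_Suc using step.IH by simp
  qed
qed

lemma elem_le_Sum: "finite A \<Longrightarrow> (x::nat) \<in> A \<Longrightarrow> x \<le> \<Sum>A"
  using member_le_sum[of x A "\<lambda>x. x"] by simp

lemma tele_le:
  assumes "finite P" "\<forall>p\<in>P. prime p \<and> r \<le> p"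
  shows "(\<Sum>p\<in>P. V p / real p) \<le> V r"
proof -
  define N where "N = Suc (r + \<Sum>P)"
  have sub: "P \<subseteq> {p. prime p \<and> r \<le> p \<and> p < N}"
  proof
    fix p assume p: "p \<in> P"
    have "p \<le> \<Sum>P" using assms(1) p by (rule elem_le_Sum)
    then show "p \<in> {p. prime p \<and> r \<le> p \<and> p < N}" using assms(2) p unfolding N_def by auto
  qed
  have "(\<Sum>p\<in>P. V p / real p) \<le> (\<Sum>p\<in>{p. prime p \<and> r \<le> p \<and> p < N}. V p / real p)"
  proof (rule sum_mono2)
    show "finite {p. prime p \<and> r \<le> p \<and> p < N}" by simp
    show "P \<subseteq> {p. prime p \<and> r \<le> p \<and> p < N}" by (rule sub)
    show "0 \<le> V b / real b" for b using V_pos[of b] by simp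
  qed
  also have "\<dots> = V r - V N" unfolding N_def by (rule tele) simp
  also have "\<dots> \<le> V r" using V_pos[of N] by simp
  finally show ?thesis .
qed

lemma w_nonneg: "w c \<ge> 0"
  unfolding w_def using V_pos[of "ttop c"] by simp

definition antichain :: "nat set \<Rightarrow> bool" where
  "antichain F \<longleftrightarrow> (\<forall>a\<in>F. \<forall>b\<in>F. a \<in> LL b \<longrightarrow> a = b)"

lemma anti_sum_aux:
  "\<forall>c F. c \<ge> 1 \<longrightarrow> finite F \<longrightarrow> F \<subseteq> LL c \<longrightarrow> antichain F \<longrightarrow> (\<forall>a\<in>F. a \<le> c + k)
     \<longrightarrow> (\<Sum>a\<in>F. w a) \<le> w c"
proof (induction k rule: less_induct)
  case (less k)
  show ?case
  proof (intro allI impI)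
    fix c F
    assume c1: "c \<ge> 1" and fin: "finite F" and sub: "F \<subseteq> LL c" and ac: "antichain F"
      and bd: "\<forall>a\<in>F. a \<le> c + k"
    show "(\<Sum>a\<in>F. w a) \<le> w c"
    proof (cases "c \<in> F")
      case True
      have "F = {c}"
      proof
        show "F \<subseteq> {c}"
        proof
          fix a assume "a \<in> F"
          then have "a = c" using ac True sub unfolding antichain_def by blast
          then show "a \<in> {c}" by simp
        qed
      qed (use True in simp)
      then show ?thesis by simp
    next
      case False
      define pa where "pa a = (SOME p. prime p \<and> ttop c \<le> p \<and> a \<in> LL (c*p) \<and> ttop (c*p) = p)" for a
      have pa: "prime (pa a) \<and> ttop c \<le> pa a \<and> a \<in> LL (c * pa a) \<and> ttop (c * pa a) = pa a"
        if "a \<in> F" for a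
      proof -
        have "a \<noteq> c" using that False by auto
        then have "\<exists>p. prime p \<and> ttop c \<le> p \<and> a \<in> LL (c*p) \<and> ttop (c*p) = p"
          using LL_child[of a c] sub that c1 by blast
        then show ?thesis unfolding pa_def by (rule someI_ex)
      qed
      have "(\<Sum>a\<in>F. w a) = (\<Sum>p\<in>pa ` F. \<Sum>a\<in>{a\<in>F. pa a = p}. w a)"
        using fin by (rule sum.image_gen)
      also have "\<dots> \<le> (\<Sum>p\<in>pa ` F. V p / (real c * real p))"
      proof (rule sum_mono)
        fix p assume p: "p \<in> pa ` F"
        then obtain a0 where a0: "a0 \<in> F" "p = pa a0" by blast
        have pp: "prime p" "ttop (c*p) = p" using pa[OF a0(1)] a0(2) by auto
        have p2: "p \<ge> 2" using pp(1) by (rule prime_ge_2_nat)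
        have ccp: "c < c * p" using c1 p2 by simp
        have cpa: "c * p \<le> a0" using pa[OF a0(1)] a0(2) LL_ge by blast
        define k' where "k' = c + k - c * p"
        have "a0 \<le> c + k" using bd a0(1) by blast
        then have kk: "k' < k" unfolding k'_def using ccp cpa by linarith
        have "(\<Sum>a\<in>{a\<in>F. pa a = p}. w a) \<le> w (c * p)"
        proof -
          have "c * p \<ge> 1" using ccp by simp
          moreover have "finite {a\<in>F. pa a = p}" using fin by simp
          moreover have "{a\<in>F. pa a = p} \<subseteq> LL (c * p)" using pa by blast
          moreover have "antichain {a\<in>F. pa a = p}" using ac unfolding antichain_def by blast
          moreover have "\<forall>a\<in>{a\<in>F. pa a = p}. a \<le> c * p + k'"
            unfolding k'_def using bd cpa by auto
          ultimately show ?thesis using less.IH[OF kk] by blast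
        qed
        also have "w (c * p) = V p / (real c * real p)" unfolding w_def pp(2) by simp
        finally show "(\<Sum>a\<in>{a\<in>F. pa a = p}. w a) \<le> V p / (real c * real p)" .
      qed
      also have "\<dots> = (\<Sum>p\<in>pa ` F. V p / real p) / real c"
        by (simp add: sum_divide_distrib field_simps)
      also have "\<dots> \<le> V (ttop c) / real c"
      proof (rule divide_right_mono)
        show "(\<Sum>p\<in>pa ` F. V p / real p) \<le> V (ttop c)"
          using fin pa by (intro tele_le) auto
      qed simp
      also have "\<dots> = w c" unfolding w_def by simp
      finally show ?thesis .
    qed
  qed
qed

lemma anti_sum:
  assumes "c \<ge> 1" "finite F" "F \<subseteq> LL c" "antichain F"
  shows "(\<Sum>a\<in>F. w a) \<le> w c"
proof -
  define k where "k = \<Sum>F"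
  have "\<forall>a\<in>F. a \<le> c + k" unfolding k_def using assms(2) elem_le_Sum[of F] by fastforce
  then show ?thesis using anti_sum_aux[of k] assms by blast
qed


lemma harm_bound:
  assumes "K \<ge> 1"
  shows "(\<Sum>n\<in>{1..K}. 1 / real n) \<le> 1 + ln (real K)"
proof -
  obtain n where n: "K = Suc n" using assms by (cases K) auto
  have "harm (Suc n) - ln (real (Suc n)) \<le> harm (Suc 0) - ln (real (Suc 0))"
    using decseq_harm_diff_ln unfolding decseq_def by blast
  then have "harm K \<le> 1 + ln (real K)" unfolding n by (simp add: harm_def)
  then show ?thesis by (simp add: harm_def divide_inverse)
qed

lemma coprime_smooth_rough:
  assumes "s \<ge> 1" "s < p" "rough p m"
  shows "coprime s m"
proof (rule ccontr)
  assume "\<not> coprime s m"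
  then obtain d where d: "d dvd s" "d dvd m" "\<not> is_unit d" by (rule not_coprimeE)
  then have "d \<noteq> 1" by auto
  then obtain q where q: "prime q" "q dvd d" using prime_factor_nat by blast
  have "q dvd s" "q dvd m" using q d dvd_trans by blast+
  then have "q \<le> s" using assms(1) by (intro dvd_imp_le) auto
  moreover have "p \<le> q" using assms(3) q(1) \<open>q dvd m\<close> unfolding rough_def by blast
  ultimately show False using assms(2) by simp
qed

lemma sr_inj:
  "inj_on (\<lambda>(s,m). s * m) ({1..p-1} \<times> {m. 1 \<le> m \<and> m \<le> M \<and> rough p m})"
proof (rule inj_onI, clarify)
  fix s m s' m' :: nat
  assume s: "s \<in> {1..p-1}" "s' \<in> {1..p-1}" and m: "1 \<le> m" "rough p m" "1 \<le> m'" "rough p m'"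
    and eq: "s * m = s' * m'"
  have sp: "s \<ge> 1" "s < p" "s' \<ge> 1" "s' < p" using s by auto
  have c1: "coprime s m'" using sp(1,2) m(4) by (rule coprime_smooth_rough)
  have c2: "coprime s' m" using sp(3,4) m(2) by (rule coprime_smooth_rough)
  have "s dvd s' * m'" using eq by (metis dvd_triv_left)
  then have d1: "s dvd s'" using c1 by (simp add: coprime_dvd_mult_left_iff)
  have "s' dvd s * m" using eq by (metis dvd_triv_left)
  then have d2: "s' dvd s" using c2 by (simp add: coprime_dvd_mult_left_iff)
  have "s = s'" using d1 d2 by (rule dvd_antisym)
  moreover then have "m = m'" using eq sp(1) by simp
  ultimately show "s = s' \<and> m = m'" by simp
qed

lemma rough_sum_bound:
  assumes p: "prime p" and M: "M \<ge> 1"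
  shows "ln (real p) * (\<Sum>m\<in>{m. 1 \<le> m \<and> m \<le> M \<and> rough p m}. 1 / real m) \<le> 1 + ln (real ((p-1) * M))"
proof -
  define R where "R = {m. 1 \<le> m \<and> m \<le> M \<and> rough p m}"
  define S where "S = {1..p-1}"
  have finR: "finite R" unfolding R_def by simp
  have p2: "p \<ge> 2" using p by (rule prime_ge_2_nat)
  have "ln (real p) \<le> harm (p - 1)"
    using ln_le_harm[of "p-1"] p2 by (simp add: of_nat_diff)
  also have "harm (p-1) = (\<Sum>s\<in>S. 1 / real s)" unfolding harm_def S_def by (simp add: divide_inverse)
  finally have lh: "ln (real p) \<le> (\<Sum>s\<in>S. 1 / real s)" .
  have Rnn: "(\<Sum>m\<in>R. 1 / real m) \<ge> 0" by (intro sum_nonneg) simp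
  have "ln (real p) * (\<Sum>m\<in>R. 1 / real m) \<le> (\<Sum>s\<in>S. 1 / real s) * (\<Sum>m\<in>R. 1 / real m)"
    using lh Rnn by (rule mult_right_mono)
  also have "\<dots> = (\<Sum>s\<in>S. \<Sum>m\<in>R. 1 / real (s * m))"
    by (simp add: sum_product)
  also have "\<dots> = (\<Sum>x\<in>S \<times> R. 1 / real (fst x * snd x))"
    by (simp add: sum.cartesian_product case_prod_beta)
  also have "\<dots> = (\<Sum>n\<in>(\<lambda>(s,m). s * m) ` (S \<times> R). 1 / real n)"
  proof -
    have inj: "inj_on (\<lambda>(s,m). s * m) (S \<times> R)" unfolding S_def R_def by (rule sr_inj)
    have "(\<Sum>n\<in>(\<lambda>(s,m). s * m) ` (S \<times> R). 1 / real n) = (\<Sum>x\<in>S \<times> R. 1 / real ((\<lambda>(s,m). s * m) x))"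
      using sum.reindex[OF inj, of "\<lambda>n. 1 / real n"] by (simp add: comp_def)
    then show ?thesis by (simp add: case_prod_beta)
  qed
  also have "\<dots> \<le> (\<Sum>n\<in>{1..(p-1)*M}. 1 / real n)"
  proof (rule sum_mono2)
    show "finite {1..(p-1)*M}" by simp
    show "(\<lambda>(s,m). s * m) ` (S \<times> R) \<subseteq> {1..(p-1)*M}"
    proof clarify
      fix s m assume "s \<in> S" "m \<in> R"
      then have "1 \<le> s" "s \<le> p - 1" "1 \<le> m" "m \<le> M" unfolding S_def R_def by auto
      then show "s * m \<in> {1..(p-1)*M}" by (simp add: mult_le_mono)
    qed
    show "0 \<le> 1 / real b" for b by simp
  qed
  also have "\<dots> \<le> 1 + ln (real ((p-1) * M))"
  proof (rule harm_bound)
    show "1 \<le> (p-1) * M" using p2 M by simp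
  qed
  finally show ?thesis unfolding R_def .
qed


lemma LL_bound:
  "\<exists>K>0. \<forall>c N. c \<ge> 1 \<longrightarrow> N \<ge> 1 \<longrightarrow>
     (\<Sum>n\<in>{n\<in>LL c. 1 \<le> n \<and> n \<le> N}. 1 / real n) \<le> K * w c * (1 + ln (real N))"
proof -
  obtain \<kappa> where k0: "\<kappa> > 0" and kb: "\<forall>p. prime p \<longrightarrow> \<kappa> \<le> V p * ln (real p)"
    using V_lower by blast
  define K where "K = 1 / \<kappa>"
  have K0: "K > 0" unfolding K_def using k0 by simp
  have main: "(\<Sum>n\<in>{n\<in>LL c. 1 \<le> n \<and> n \<le> N}. 1 / real n) \<le> K * w c * (1 + ln (real N))"
    if c1: "c \<ge> 1" and N1: "N \<ge> 1" for c N
  proof -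
    define p where "p = ttop c"
    define M where "M = N div c"
    define R where "R = {m. 1 \<le> m \<and> m \<le> M \<and> rough p m}"
    have pp: "prime p" unfolding p_def by (rule ttop_prime)
    have p2: "p \<ge> 2" using pp by (rule prime_ge_2_nat)
    have c0: "c > 0" using c1 by simp
    have pc: "p - 1 \<le> c"
    proof (cases "c = 1")
      case True then show ?thesis unfolding p_def ttop_def by simp
    next
      case False then have "c > 1" using c1 by simp
      then have "p \<le> c" unfolding p_def by (rule ttop_le)
      then show ?thesis by simp
    qed
    have seteq: "{n\<in>LL c. 1 \<le> n \<and> n \<le> N} = (\<lambda>m. c * m) ` R"
    proof
      show "{n\<in>LL c. 1 \<le> n \<and> n \<le> N} \<subseteq> (\<lambda>m. c * m) ` R"
      proof
        fix n assume n: "n \<in> {n\<in>LL c. 1 \<le> n \<and> n \<le> N}"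
        then obtain m where m: "n = c * m" "m \<ge> 1" "rough p m" unfolding LL_def p_def by blast
        have "m * c \<le> N" using n m by (simp add: mult.commute)
        then have "m \<le> M" unfolding M_def using c0 by (simp add: less_eq_div_iff_mult_less_eq)
        then show "n \<in> (\<lambda>m. c * m) ` R" unfolding R_def using m by blast
      qed
      show "(\<lambda>m. c * m) ` R \<subseteq> {n\<in>LL c. 1 \<le> n \<and> n \<le> N}"
      proof
        fix n assume "n \<in> (\<lambda>m. c * m) ` R"
        then obtain m where m: "n = c * m" "1 \<le> m" "m \<le> M" "rough p m" unfolding R_def by blast
        have "m * c \<le> N" using m(3) c0 unfolding M_def by (simp add: less_eq_div_iff_mult_less_eq)
        then have "n \<le> N" using m(1) by (simp add: mult.commute)
        moreover have "n \<in> LL c" unfolding LL_def p_def using m p_def by blast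
        moreover have "1 \<le> n" using m c1 by simp
        ultimately show "n \<in> {n\<in>LL c. 1 \<le> n \<and> n \<le> N}" by blast
      qed
    qed
    have "(\<Sum>n\<in>{n\<in>LL c. 1 \<le> n \<and> n \<le> N}. 1 / real n) = (\<Sum>m\<in>R. 1 / real (c * m))"
    proof -
      have inj: "inj_on (\<lambda>m. c * m) R" using c0 by (auto simp: inj_on_def)
      show ?thesis unfolding seteq using sum.reindex[OF inj, of "\<lambda>n. 1 / real n"] by (simp add: comp_def)
    qed
    also have "\<dots> = (\<Sum>m\<in>R. 1 / real m) / real c"
      by (simp add: sum_divide_distrib mult.commute)
    also have "\<dots> \<le> ((1 + ln (real N)) * V p / \<kappa>) / real c"
    proof (rule divide_right_mono)
      have lnN: "1 + ln (real N) \<ge> 1" using N1 by simp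
      have Vp: "V p > 0" by (rule V_pos)
      show "(\<Sum>m\<in>R. 1 / real m) \<le> (1 + ln (real N)) * V p / \<kappa>"
      proof (cases "M = 0")
        case True
        then have "R = {}" unfolding R_def by auto
        then show ?thesis using lnN Vp k0 by simp
      next
        case False
        then have M1: "M \<ge> 1" by simp
        have lp: "ln (real p) > 0" using p2 by simp
        have "ln (real p) * (\<Sum>m\<in>R. 1 / real m) \<le> 1 + ln (real ((p-1) * M))"
          unfolding R_def using pp M1 by (rule rough_sum_bound)
        also have "\<dots> \<le> 1 + ln (real N)"
        proof -
          have "(p-1) * M \<le> c * M" using pc by simp
          also have "c * M \<le> N" unfolding M_def by simp
          finally have "real ((p-1) * M) \<le> real N" by linarith
          moreover have "real ((p-1) * M) > 0" using p2 M1 by simp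
          ultimately have "ln (real ((p-1) * M)) \<le> ln (real N)" using ln_le_cancel_iff by (metis less_le_trans)
          then show ?thesis by linarith
        qed
        finally have s1: "ln (real p) * (\<Sum>m\<in>R. 1 / real m) \<le> 1 + ln (real N)" .
        have kv: "\<kappa> \<le> V p * ln (real p)" using kb pp by blast
        have "\<kappa> * (\<Sum>m\<in>R. 1 / real m) \<le> V p * ln (real p) * (\<Sum>m\<in>R. 1 / real m)"
          using kv by (rule mult_right_mono) (simp add: sum_nonneg)
        also have "\<dots> = V p * (ln (real p) * (\<Sum>m\<in>R. 1 / real m))" by simp
        also have "\<dots> \<le> V p * (1 + ln (real N))" using s1 Vp by simp
        finally have "\<kappa> * (\<Sum>m\<in>R. 1 / real m) \<le> V p * (1 + ln (real N))" .
        then show ?thesis using k0 by (simp add: field_simps)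
      qed
    qed simp
    also have "\<dots> = K * w c * (1 + ln (real N))"
      unfolding K_def w_def p_def by simp
    finally show ?thesis .
  qed
  show ?thesis using K0 main by blast
qed


definition fd :: "nat set \<Rightarrow> real \<Rightarrow> real" where
  "fd B x = (1 / ln x) * (\<Sum>n\<in>{n\<in>B. 1 \<le> n \<and> real n \<le> x}. 1 / real n)"

definition null :: "nat set \<Rightarrow> bool" where
  "null B \<longleftrightarrow> (\<forall>\<epsilon>>0. eventually (\<lambda>x. fd B x \<le> \<epsilon>) at_top)"

lemma finite_le_real: "finite {n::nat. real n \<le> x}"
proof -
  have "{n::nat. real n \<le> x} \<subseteq> {..nat \<lceil>x\<rceil>}"
  proof
    fix n assume "n \<in> {n::nat. real n \<le> x}"
    then have "real n \<le> x" by simp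
    then have "int n \<le> \<lceil>x\<rceil>" by linarith
    then show "n \<in> {..nat \<lceil>x\<rceil>}" by simp
  qed
  then show ?thesis by (rule finite_subset) simp
qed

lemma finite_seg: "finite {n\<in>B. 1 \<le> n \<and> real n \<le> x}"
  by (rule finite_subset[OF _ finite_le_real[of x]]) blast

lemma fd_mono:
  assumes "C \<subseteq> B" "x > 1"
  shows "fd C x \<le> fd B x"
proof -
  have "(\<Sum>n\<in>{n\<in>C. 1 \<le> n \<and> real n \<le> x}. 1 / real n) \<le> (\<Sum>n\<in>{n\<in>B. 1 \<le> n \<and> real n \<le> x}. 1 / real n)"
    by (rule sum_mono2[OF finite_seg]) (use assms(1) in auto)
  moreover have "1 / ln x \<ge> 0" using assms(2) by simp
  ultimately show ?thesis unfolding fd_def by (rule mult_left_mono)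
qed

lemma fd_Un:
  assumes "x > 1"
  shows "fd (B \<union> C) x \<le> fd B x + fd C x"
proof -
  define SB where "SB = {n\<in>B. 1 \<le> n \<and> real n \<le> x}"
  define SC where "SC = {n\<in>C. 1 \<le> n \<and> real n \<le> x}"
  have e: "{n\<in>B \<union> C. 1 \<le> n \<and> real n \<le> x} = SB \<union> SC" unfolding SB_def SC_def by auto
  have fin: "finite SB" "finite SC" unfolding SB_def SC_def by (rule finite_seg)+
  have "(\<Sum>n\<in>SB \<union> SC. 1 / real n) = (\<Sum>n\<in>SB. 1 / real n) + (\<Sum>n\<in>SC. 1 / real n) - (\<Sum>n\<in>SB \<inter> SC. 1 / real n)"
    using fin by (rule sum_Un)
  also have "\<dots> \<le> (\<Sum>n\<in>SB. 1 / real n) + (\<Sum>n\<in>SC. 1 / real n)"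
    by (simp add: sum_nonneg)
  finally have s: "(\<Sum>n\<in>SB \<union> SC. 1 / real n) \<le> (\<Sum>n\<in>SB. 1 / real n) + (\<Sum>n\<in>SC. 1 / real n)" .
  have l: "1 / ln x \<ge> 0" using assms by simp
  have "fd (B \<union> C) x = (1 / ln x) * (\<Sum>n\<in>SB \<union> SC. 1 / real n)" unfolding fd_def e ..
  also have "\<dots> \<le> (1 / ln x) * ((\<Sum>n\<in>SB. 1 / real n) + (\<Sum>n\<in>SC. 1 / real n))"
    using s l by (rule mult_left_mono)
  also have "\<dots> = fd B x + fd C x" unfolding fd_def SB_def SC_def by (simp add: distrib_left)
  finally show ?thesis .
qed

lemma null_mono: "null B \<Longrightarrow> C \<subseteq> B \<Longrightarrow> null C"
  unfolding null_def
proof (intro allI impI)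
  fix \<epsilon> :: real assume nb: "\<forall>\<epsilon>>0. eventually (\<lambda>x. fd B x \<le> \<epsilon>) at_top" and sub: "C \<subseteq> B" and e: "\<epsilon> > 0"
  have "eventually (\<lambda>x. fd B x \<le> \<epsilon>) at_top" using nb e by blast
  moreover have "eventually (\<lambda>x::real. x > 1) at_top" by (rule eventually_gt_at_top)
  ultimately show "eventually (\<lambda>x. fd C x \<le> \<epsilon>) at_top"
    by eventually_elim (use fd_mono[OF sub] in force)
qed

lemma null_Un: "null B \<Longrightarrow> null C \<Longrightarrow> null (B \<union> C)"
  unfolding null_def
proof (intro allI impI)
  fix \<epsilon> :: real assume nb: "\<forall>\<epsilon>>0. eventually (\<lambda>x. fd B x \<le> \<epsilon>) at_top"
    and nc: "\<forall>\<epsilon>>0. eventually (\<lambda>x. fd C x \<le> \<epsilon>) at_top" and e: "\<epsilon> > 0"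
  have e2: "\<epsilon>/2 > 0" using e by simp
  have "eventually (\<lambda>x. fd B x \<le> \<epsilon>/2) at_top" using nb e2 by blast
  moreover have "eventually (\<lambda>x. fd C x \<le> \<epsilon>/2) at_top" using nc e2 by blast
  moreover have "eventually (\<lambda>x::real. x > 1) at_top" by (rule eventually_gt_at_top)
  ultimately show "eventually (\<lambda>x. fd (B \<union> C) x \<le> \<epsilon>) at_top"
  proof eventually_elim
    case (elim x)
    then show ?case using fd_Un[of x B C] by linarith
  qed
qed

lemma null_finite:
  assumes "finite B"
  shows "null B"
  unfolding null_def
proof (intro allI impI)
  fix \<epsilon> :: real assume e: "\<epsilon> > 0"
  define s where "s = (\<Sum>n\<in>B. 1 / real n)"
  have s0: "s \<ge> 0" unfolding s_def by (simp add: sum_nonneg)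
  have "eventually (\<lambda>x::real. x \<ge> exp (s / \<epsilon> + 1)) at_top" by (rule eventually_ge_at_top)
  then show "eventually (\<lambda>x. fd B x \<le> \<epsilon>) at_top"
  proof eventually_elim
    case (elim x)
    have x0: "x > 0" using elim by (smt (verit) exp_gt_zero)
    have lx: "ln x \<ge> s / \<epsilon> + 1" using elim x0 by (metis ln_exp ln_le_cancel_iff exp_gt_zero)
    have lx0: "ln x > 0" using lx s0 e by (smt (verit) divide_nonneg_pos)
    have sum: "(\<Sum>n\<in>{n\<in>B. 1 \<le> n \<and> real n \<le> x}. 1 / real n) \<le> s"
      unfolding s_def by (rule sum_mono2[OF assms]) auto
    have "fd B x \<le> (1 / ln x) * s" unfolding fd_def using sum lx0 by (intro mult_left_mono) auto
    also have "\<dots> \<le> \<epsilon>"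
    proof -
      have "s \<le> \<epsilon> * (s / \<epsilon>)" using e by simp
      also have "\<dots> \<le> \<epsilon> * ln x" using lx e by (intro mult_left_mono) auto
      finally have "s \<le> \<epsilon> * ln x" .
      then show ?thesis using lx0 by (simp add: field_simps)
    qed
    finally show ?case .
  qed
qed

lemma null_UN:
  assumes "finite Q" "\<forall>a\<in>Q. null (g a)"
  shows "null (\<Union>a\<in>Q. g a)"
  using assms
proof (induction Q rule: finite_induct)
  case empty then show ?case using null_finite[of "{}"] by simp
next
  case (insert a Q)
  then show ?case using null_Un[of "g a" "\<Union>a\<in>Q. g a"] by simp
qed

lemma pos_not_null:
  assumes "upper_log_density A > 0"
  shows "\<not> null A"
proof
  assume n: "null A"
  have "upper_log_density A \<le> 0 + ereal e" if e: "e > 0" for e :: real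
  proof -
    have ev: "eventually (\<lambda>x. fd A x \<le> e) at_top" using n e unfolding null_def by blast
    have "eventually (\<lambda>x. ereal ((1 / ln x) * (\<Sum>n\<in>{n\<in>A. 1 \<le> n \<and> real n \<le> x}. 1 / real n)) \<le> ereal e) at_top"
      using ev unfolding fd_def by (rule eventually_mono) simp
    then have "upper_log_density A \<le> ereal e" unfolding upper_log_density_def by (rule Limsup_bounded)
    then show ?thesis by simp
  qed
  then have "upper_log_density A \<le> 0" by (rule ereal_le_epsilon2)
  then show False using assms by simp
qed


lemma sum_UN_le:
  fixes f :: "nat \<Rightarrow> real"
  assumes "finite G" "\<forall>a\<in>G. finite (S a)" "\<forall>x. f x \<ge> 0"
  shows "sum f (\<Union>a\<in>G. S a) \<le> (\<Sum>a\<in>G. sum f (S a))"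
  using assms
proof (induction G rule: finite_induct)
  case empty then show ?case by simp
next
  case (insert a G)
  have fin1: "finite (S a)" using insert by simp
  have fin2: "finite (\<Union>a\<in>G. S a)" using insert by simp
  have "sum f (\<Union>a\<in>insert a G. S a) = sum f (S a \<union> (\<Union>a\<in>G. S a))" by simp
  also have "\<dots> = sum f (S a) + sum f (\<Union>a\<in>G. S a) - sum f (S a \<inter> (\<Union>a\<in>G. S a))"
    using fin1 fin2 by (rule sum_Un)
  also have "\<dots> \<le> sum f (S a) + sum f (\<Union>a\<in>G. S a)"
    using insert(5) by (simp add: sum_nonneg)
  also have "\<dots> \<le> sum f (S a) + (\<Sum>a\<in>G. sum f (S a))" using insert by simp
  also have "\<dots> = (\<Sum>a\<in>insert a G. sum f (S a))" using insert(1,2) by simp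
  finally show ?case .
qed

lemma step:
  assumes c1: "c \<ge> 1" and nn: "\<not> null (B \<inter> LL c)"
  shows "\<exists>a\<in>B \<inter> LL c. a \<noteq> c \<and> \<not> null (B \<inter> LL a)"
proof (rule ccontr)
  assume "\<not> (\<exists>a\<in>B \<inter> LL c. a \<noteq> c \<and> \<not> null (B \<inter> LL a))"
  then have H0: "\<forall>a\<in>B \<inter> LL c. a \<noteq> c \<longrightarrow> null (B \<inter> LL a)" by blast
  define X where "X = B \<inter> LL c - {c}"
  define H where "H = {a\<in>X. \<forall>b\<in>X. a \<in> LL b \<longrightarrow> a = b}"
  have Xge: "b \<ge> 1" if "b \<in> X" for b
  proof -
    have "c \<le> b" using that LL_ge unfolding X_def by blast
    then show ?thesis using c1 by simp
  qed
  have cover: "\<exists>a\<in>H. n \<in> LL a" if n: "n \<in> X" for n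
  proof -
    define a where "a = (LEAST a. a \<in> X \<and> n \<in> LL a)"
    have ex: "n \<in> X \<and> n \<in> LL n" using n self_LL by blast
    have a: "a \<in> X \<and> n \<in> LL a" unfolding a_def using ex by (rule LeastI)
    have "a \<in> H" unfolding H_def
    proof (intro CollectI conjI ballI impI)
      show "a \<in> X" using a by blast
      fix b assume b: "b \<in> X" "a \<in> LL b"
      show "a = b"
      proof (rule ccontr)
        assume ne: "a \<noteq> b"
        have lt: "b < a" using b(2) ne by (rule LL_proper_less)
        have "n \<in> LL b" using b(2) a Xge[OF b(1)] LL_trans by blast
        then have "b \<in> X \<and> n \<in> LL b" using b(1) by blast
        then have "a \<le> b" unfolding a_def by (rule Least_le)
        then show False using lt by simp
      qed
    qed
    then show ?thesis using a by blast
  qed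
  have HX: "H \<subseteq> X" unfolding H_def by blast
  have Fbound: "(\<Sum>a\<in>F. w a) \<le> w c" if F: "finite F" "F \<subseteq> H" for F
  proof (rule anti_sum)
    show "1 \<le> c" by (rule c1)
    show "finite F" by (rule F(1))
    show "F \<subseteq> LL c" using F(2) HX unfolding X_def by blast
    show "antichain F" unfolding antichain_def using F(2) unfolding H_def by blast
  qed
  have "null (B \<inter> LL c)"
    unfolding null_def
  proof (intro allI impI)
    fix \<epsilon> :: real assume e: "\<epsilon> > 0"
    obtain K where K0: "K > 0" and Kb: "\<forall>c N. c \<ge> 1 \<longrightarrow> N \<ge> 1 \<longrightarrow>
       (\<Sum>n\<in>{n\<in>LL c. 1 \<le> n \<and> n \<le> N}. 1 / real n) \<le> K * w c * (1 + ln (real N))"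
      using LL_bound by blast
    define \<delta> where "\<delta> = \<epsilon> / (4 * K)"
    have d0: "\<delta> > 0" unfolding \<delta>_def using e K0 by simp
    define Sums where "Sums = {(\<Sum>a\<in>F. w a) | F. finite F \<and> F \<subseteq> H}"
    have Sne: "Sums \<noteq> {}" unfolding Sums_def by blast
    have Sbdd: "bdd_above Sums" unfolding Sums_def bdd_above_def using Fbound by blast
    have "Sup Sums - \<delta> < Sup Sums" using d0 by simp
    then obtain v where v: "v \<in> Sums" "Sup Sums - \<delta> < v" using less_cSup_iff[OF Sne Sbdd] by blast
    then obtain Q where Q: "finite Q" "Q \<subseteq> H" "v = (\<Sum>a\<in>Q. w a)" unfolding Sums_def by blast
    have tail: "(\<Sum>a\<in>G. w a) \<le> \<delta>" if G: "finite G" "G \<subseteq> H - Q" for G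
    proof -
      have "(\<Sum>a\<in>G \<union> Q. w a) = (\<Sum>a\<in>G. w a) + (\<Sum>a\<in>Q. w a)"
        using G Q by (intro sum.union_disjoint) auto
      moreover have "(\<Sum>a\<in>G \<union> Q. w a) \<in> Sums" unfolding Sums_def using G Q by blast
      then have "(\<Sum>a\<in>G \<union> Q. w a) \<le> Sup Sums" using Sbdd by (rule cSup_upper)
      ultimately show ?thesis using v Q(3) by linarith
    qed
    define U where "U = (\<Union>a\<in>H - Q. LL a)"
    define Y where "Y = {c} \<union> (\<Union>a\<in>Q. B \<inter> LL a)"
    have cov: "B \<inter> LL c \<subseteq> Y \<union> U"
    proof
      fix n assume n: "n \<in> B \<inter> LL c"
      show "n \<in> Y \<union> U"
      proof (cases "n = c")
        case True then show ?thesis unfolding Y_def by blast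
      next
        case False
        then have "n \<in> X" using n unfolding X_def by blast
        then obtain a where a: "a \<in> H" "n \<in> LL a" using cover by blast
        show ?thesis
        proof (cases "a \<in> Q")
          case True then show ?thesis using a n unfolding Y_def by blast
        next
          case False then show ?thesis using a unfolding U_def by blast
        qed
      qed
    qed
    have nY: "null Y"
      unfolding Y_def
    proof (rule null_Un)
      show "null {c}" by (rule null_finite) simp
      show "null (\<Union>a\<in>Q. B \<inter> LL a)"
      proof (rule null_UN)
        show "finite Q" by (rule Q(1))
        show "\<forall>a\<in>Q. null (B \<inter> LL a)" using H0 Q(2) HX unfolding X_def by blast
      qed
    qed
    have e2: "\<epsilon> / 2 > 0" using e by simp
    have evY: "eventually (\<lambda>x. fd Y x \<le> \<epsilon> / 2) at_top" using nY e2 unfolding null_def by blast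
    have evU: "eventually (\<lambda>x. fd U x \<le> \<epsilon> / 2) at_top"
    proof -
      have "eventually (\<lambda>x::real. x \<ge> exp 1) at_top" by (rule eventually_ge_at_top)
      then show ?thesis
      proof eventually_elim
        case (elim x)
        have e1: "2 \<le> exp (1::real)" using exp_ge_add_one_self_aux[of 1] by simp
        have x2: "x \<ge> 2" using elim e1 by linarith
        have "ln (exp 1) \<le> ln x" using elim x2 by (subst ln_le_cancel_iff) auto
        then have lx: "ln x \<ge> 1" by simp
        define N where "N = nat \<lfloor>x\<rfloor>"
        have N1: "N \<ge> 1" unfolding N_def using x2 by linarith
        have Nx: "real N \<le> x" unfolding N_def using x2 by linarith
        define G where "G = {a\<in>H - Q. a \<le> N}"
        have finG: "finite G" unfolding G_def by simp
        have seg: "{n\<in>U. 1 \<le> n \<and> real n \<le> x} \<subseteq> (\<Union>a\<in>G. {n\<in>LL a. 1 \<le> n \<and> n \<le> N})"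
        proof
          fix n assume n: "n \<in> {n\<in>U. 1 \<le> n \<and> real n \<le> x}"
          then obtain a where a: "a \<in> H - Q" "n \<in> LL a" unfolding U_def by blast
          have "real n \<le> x" using n by blast
          then have "int n \<le> \<lfloor>x\<rfloor>" by linarith
          then have nN: "n \<le> N" unfolding N_def by simp
          have "a \<le> n" using a(2) by (rule LL_ge)
          then have "a \<in> G" unfolding G_def using a nN by simp
          then show "n \<in> (\<Union>a\<in>G. {n\<in>LL a. 1 \<le> n \<and> n \<le> N})" using a n nN by blast
        qed
        have "(\<Sum>n\<in>{n\<in>U. 1 \<le> n \<and> real n \<le> x}. 1 / real n)
            \<le> (\<Sum>n\<in>(\<Union>a\<in>G. {n\<in>LL a. 1 \<le> n \<and> n \<le> N}). 1 / real n)"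
          by (rule sum_mono2) (use finG seg in auto)
        also have "\<dots> \<le> (\<Sum>a\<in>G. \<Sum>n\<in>{n\<in>LL a. 1 \<le> n \<and> n \<le> N}. 1 / real n)"
          by (rule sum_UN_le) (use finG in auto)
        also have "\<dots> \<le> (\<Sum>a\<in>G. K * w a * (1 + ln (real N)))"
        proof (rule sum_mono)
          fix a assume "a \<in> G"
          then have "a \<ge> 1" using Xge HX unfolding G_def by blast
          then show "(\<Sum>n\<in>{n\<in>LL a. 1 \<le> n \<and> n \<le> N}. 1 / real n) \<le> K * w a * (1 + ln (real N))"
            using Kb N1 by blast
        qed
        also have "\<dots> = K * (1 + ln (real N)) * (\<Sum>a\<in>G. w a)"
          by (simp add: sum_distrib_left sum_distrib_right mult_ac)
        also have "\<dots> \<le> K * (1 + ln (real N)) * \<delta>"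
        proof (rule mult_left_mono)
          show "(\<Sum>a\<in>G. w a) \<le> \<delta>" using finG by (rule tail) (auto simp: G_def)
          show "0 \<le> K * (1 + ln (real N))" using K0 N1 by simp
        qed
        also have "\<dots> \<le> K * (1 + ln x) * \<delta>"
        proof -
          have "ln (real N) \<le> ln x" using Nx N1 by simp
          then show ?thesis using K0 d0 by (simp add: mult_left_mono mult_right_mono)
        qed
        finally have s: "(\<Sum>n\<in>{n\<in>U. 1 \<le> n \<and> real n \<le> x}. 1 / real n) \<le> K * (1 + ln x) * \<delta>" .
        have l0: "ln x > 0" using lx by simp
        have "fd U x \<le> (1 / ln x) * (K * (1 + ln x) * \<delta>)"
          unfolding fd_def using s l0 by (intro mult_left_mono) auto
        also have "\<dots> = K * \<delta> * ((1 + ln x) / ln x)" by simp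
        also have "\<dots> \<le> K * \<delta> * 2"
        proof (rule mult_left_mono)
          show "(1 + ln x) / ln x \<le> 2" using lx l0 by (simp add: divide_le_eq)
          show "0 \<le> K * \<delta>" using K0 d0 by simp
        qed
        also have "\<dots> = \<epsilon> / 2" unfolding \<delta>_def using K0 by simp
        finally show ?case .
      qed
    qed
    have "eventually (\<lambda>x::real. x > 1) at_top" by (rule eventually_gt_at_top)
    with evY evU show "eventually (\<lambda>x. fd (B \<inter> LL c) x \<le> \<epsilon>) at_top"
    proof eventually_elim
      case (elim x)
      have "fd (B \<inter> LL c) x \<le> fd (Y \<union> U) x" using cov elim(3) by (rule fd_mono)
      also have "\<dots> \<le> fd Y x + fd U x" using elim(3) by (rule fd_Un)
      finally show ?case using elim(1,2) by linarith
    qed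
  qed
  then show False using nn by simp
qed


theorem theorem1p8:
  fixes A :: "nat set"
  assumes "upper_log_density A > 0"
  shows "\<exists>d. L_chain d \<and> range d \<subseteq> A"
proof -
  define A' where "A' = A - {0, 1}"
  have nA: "\<not> null A" using assms by (rule pos_not_null)
  have nA': "\<not> null A'"
  proof
    assume "null A'"
    then have "null (A' \<union> {0, 1})" using null_finite[of "{0,1}"] null_Un by blast
    moreover have "A \<subseteq> A' \<union> {0, 1}" unfolding A'_def by blast
    ultimately have "null A" by (rule null_mono)
    then show False using nA by simp
  qed
  have LL1: "A' \<inter> LL 1 = A'"
  proof -
    have "n \<in> LL 1" if "n \<in> A'" for n
    proof -
      have n1: "n \<ge> 1" using that unfolding A'_def by auto
      have "rough (ttop 1) n" unfolding rough_def ttop_def using prime_ge_2_nat by simp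
      then show ?thesis unfolding LL_def using n1 by force
    qed
    then show ?thesis by blast
  qed
  define nxt where "nxt c = (SOME a. a \<in> A' \<inter> LL c \<and> a \<noteq> c \<and> \<not> null (A' \<inter> LL a))" for c
  have nxt: "nxt c \<in> A' \<inter> LL c \<and> nxt c \<noteq> c \<and> \<not> null (A' \<inter> LL (nxt c))"
    if "c \<ge> 1" "\<not> null (A' \<inter> LL c)" for c
  proof -
    have "\<exists>a. a \<in> A' \<inter> LL c \<and> a \<noteq> c \<and> \<not> null (A' \<inter> LL a)" using step[OF that] by blast
    then show ?thesis unfolding nxt_def by (rule someI_ex)
  qed
  define d where "d = rec_nat (nxt 1) (\<lambda>_ a. nxt a)"
  have d0: "d 0 = nxt 1" and dS: "d (Suc j) = nxt (d j)" for j unfolding d_def by simp_all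
  have A'ge: "a \<in> A' \<Longrightarrow> a > 1" for a unfolding A'_def by auto
  have inv: "d j \<in> A' \<and> \<not> null (A' \<inter> LL (d j))" for j
  proof (induction j)
    case 0
    have "nxt 1 \<in> A' \<inter> LL 1 \<and> nxt 1 \<noteq> 1 \<and> \<not> null (A' \<inter> LL (nxt 1))"
      using nxt[of 1] nA' LL1 by simp
    then show ?case using d0 by simp
  next
    case (Suc j)
    have "d j > 1" using A'ge Suc by blast
    then have "d j \<ge> 1" by simp
    then show ?case using nxt[of "d j"] Suc dS by simp
  qed
  have stepd: "d (Suc j) \<in> LL (d j) \<and> d (Suc j) \<noteq> d j" for j
  proof -
    have "d j > 1" using A'ge inv[of j] by blast
    then have "d j \<ge> 1" by simp
    then show ?thesis using nxt[of "d j"] inv[of j] dS by simp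
  qed
  have "L_chain d"
    unfolding L_chain_def
  proof (intro conjI allI)
    show "1 < d 0" using inv[of 0] A'ge by blast
    show "strict_mono d"
    proof (rule strict_mono_Suc_iff[THEN iffD2], intro allI)
      fix j show "d j < d (Suc j)" using stepd[of j] LL_proper_less by blast
    qed
    fix j
    have dj1: "d j > 1" using inv[of j] A'ge by blast
    obtain m where m: "d (Suc j) = d j * m" "m \<ge> 1" "rough (ttop (d j)) m"
      using stepd[of j] unfolding LL_def by blast
    have "ttop (d j) = lpf (d j)" using dj1 unfolding ttop_def by simp
    then have "\<forall>p. prime p \<longrightarrow> p dvd m \<longrightarrow> p \<ge> lpf (d j)" using m(3) unfolding rough_def by simp
    then show "d (Suc j) \<in> Lmult (d j)" unfolding Lmult_def using m(1,2) by (auto simp: mult.commute)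
  qed
  moreover have "range d \<subseteq> A" using inv unfolding A'_def by blast
  ultimately show ?thesis by blast
qed

end
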